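(* Let $m\in(1,2]$ and $U\in C^3(\mathbb{R}^d)$ such that there exists $A_1\ge0$ with $\|D^kU(q)\|\le A_1(\|q\|+1)^{m-k}$ for all $q$ and $k=2,3$, and there exist $A_2>0$, $R\ge0$ with $D^2U(q)\{\nabla U(q)\otimes\nabla U(q)\}\ge A_2\|q\|^{3m-4}$ for all $\|q\|\ge R$. Then there exist $R_0\ge0$ and $\delta,\eta>0$ such that for all $q,x,z\in\mathbb{R}^d$ with $\|q\|\ge R_0$ and $\max(\|q-x\|,\|q-z\|)\le\delta\|q\|$, $$D^2U(q)\{\nabla U(x)\otimes\nabla U(z)\}\ge\eta\|q\|^{3m-4}.$$
   Context: $D^kU$ is the $k$-th differential with operator norm; $D^2U(q)\{a\otimes b\}=\langle a,\nabla^2U(q)b\rangle$. *)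

theory Defs
  imports "HOL-Analysis.Analysis"
begin

end

theory Submission
  imports Defs "HOL-Analysis.Analysis"
begin

lemma Gbound:
  fixes G :: "'a::euclidean_space \<Rightarrow> 'a" and H :: "'a \<Rightarrow> ('a \<Rightarrow>\<^sub>L 'a)"
  assumes hess: "\<And>q. (G has_derivative blinfun_apply (H q)) (at q)"
    and m: "1 < m" "m \<le> 2" and A1: "A1 \<ge> 0"
    and bound2: "\<And>q. norm (H q) \<le> A1 * (norm q + 1) powr (m - 2)"
  shows "norm (G q) \<le> (norm (G 0) + A1/(m-1)) * (norm q + 1) powr (m-1)"
proof -
  define N where "N = norm q"
  have N0: "N \<ge> 0" by (simp add: N_def)
  have fd: "((\<lambda>t. G (t *\<^sub>R q)) has_vector_derivative (H (t *\<^sub>R q) q)) (at t within {0..1})" for t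
  proof -
    have "((\<lambda>t. t *\<^sub>R q) has_derivative (\<lambda>h. h *\<^sub>R q)) (at t within {0..1})"
      by (auto intro!: derivative_eq_intros)
    from has_derivative_in_compose[OF this has_derivative_at_withinI[OF hess]]
    show ?thesis unfolding has_vector_derivative_def by (simp add: blinfun.scaleR_right)
  qed
  define g where "g t = A1/(m-1) * (t*N+1) powr (m-1)" for t
  have gd: "(g has_vector_derivative (A1 * (t*N+1) powr (m-2) * N)) (at t within {0..1})" if "t \<in> {0..1}" for t
  proof -
    have pos: "t*N+1 > 0" using that N0 by (simp add: add_pos_nonneg)
      (smt (verit) mult_nonneg_nonneg)
    have "(g has_real_derivative (A1/(m-1) * ((m-1) * (t*N+1) powr (m-1-1) * N))) (at t within {0..1})"
      unfolding g_def using pos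
      by (auto intro!: derivative_eq_intros DERIV_powr)
    moreover have "A1/(m-1) * ((m-1) * (t*N+1) powr (m-1-1) * N) = A1 * (t*N+1) powr (m-2) * N"
      using m by (simp add: field_simps)
    ultimately show ?thesis by (simp add: has_real_derivative_iff_has_vector_derivative)
  qed
  have I1: "((\<lambda>t. H (t *\<^sub>R q) q) has_integral G q - G 0) {0..1}"
    using fundamental_theorem_of_calculus[of 0 1 "\<lambda>t. G (t *\<^sub>R q)", OF _ fd] by simp
  have I2: "((\<lambda>t. A1 * (t*N+1) powr (m-2) * N) has_integral g 1 - g 0) {0..1}"
    using fundamental_theorem_of_calculus[of 0 1 g, OF _ gd] by simp
  have le: "norm (H (t *\<^sub>R q) q) \<le> A1 * (t*N+1) powr (m-2) * N" if "t \<in> {0..1}" for t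
  proof -
    have "norm (H (t *\<^sub>R q) q) \<le> norm (H (t *\<^sub>R q)) * N" by (simp add: N_def norm_blinfun)
    also have "\<dots> \<le> A1 * (norm (t *\<^sub>R q) + 1) powr (m - 2) * N"
      by (rule mult_right_mono[OF bound2 N0])
    also have "norm (t *\<^sub>R q) = t * N" using that by (simp add: N_def)
    finally show ?thesis .
  qed
  have "norm (G q - G 0) \<le> g 1 - g 0"
    using has_integral_norm_bound_integral_component[OF I1 I2, of 1] le by simp
  also have "\<dots> \<le> A1/(m-1) * (N+1) powr (m-1)"
    using m A1 by (simp add: g_def)
  finally have "norm (G q) \<le> norm (G 0) + A1/(m-1) * (N+1) powr (m-1)"
    by (smt (verit) norm_triangle_ineq2)
  moreover have "norm (G 0) \<le> norm (G 0) * (N+1) powr (m-1)"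
    using N0 m by (simp add: ge_one_powr_ge_zero mult_le_cancel_left1)
  ultimately show ?thesis by (simp add: N_def distrib_right)
qed

lemma Gmvt:
  fixes G :: "'a::euclidean_space \<Rightarrow> 'a" and H :: "'a \<Rightarrow> ('a \<Rightarrow>\<^sub>L 'a)"
  assumes hess: "\<And>q. (G has_derivative blinfun_apply (H q)) (at q)"
    and m: "1 < m" "m \<le> 2" and A1: "A1 \<ge> 0"
    and bound2: "\<And>q. norm (H q) \<le> A1 * (norm q + 1) powr (m - 2)"
    and xq: "norm (x - q) \<le> norm q / 2"
  shows "norm (G x - G q) \<le> 2*A1*(norm q+1) powr (m-2) * norm (x - q)"
proof (rule differentiable_bound[of "closed_segment q x"])
  show "convex (closed_segment q x)" by simp
  show "x \<in> closed_segment q x" "q \<in> closed_segment q x" by auto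
  fix y assume y: "y \<in> closed_segment q x"
  show "(G has_derivative blinfun_apply (H y)) (at y within closed_segment q x)"
    using hess has_derivative_at_withinI by blast
  have "norm (y - q) \<le> norm (x - q)" using segment_bound(1)[OF y] by simp
  hence ny: "norm y \<ge> norm q / 2" using xq norm_triangle_ineq2[of q y]
    using norm_minus_commute[of q y] by linarith
  have "0 < norm q + 1" using norm_ge_zero[of q] by linarith
  hence p1: "0 < (norm q + 1)/2" by simp
  have p2: "(norm q + 1)/2 \<le> norm y + 1" using ny by simp
  have "(norm y + 1) powr (m-2) \<le> ((norm q + 1)/2) powr (m-2)"
    using powr_mono2'[OF _ p1 p2, of "m-2"] m by simp
  also have "\<dots> = (norm q + 1) powr (m-2) / 2 powr (m-2)"
    by (simp add: powr_divide)
  also have "\<dots> \<le> (norm q + 1) powr (m-2) / (1/2)"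
  proof (rule divide_left_mono)
    have "2 powr (-1) \<le> (2::real) powr (m-2)" using m by (intro powr_mono) auto
    thus "1/2 \<le> (2::real) powr (m-2)" by (simp add: powr_minus)
  qed auto
  also have "\<dots> = 2 * (norm q + 1) powr (m-2)" by simp
  finally have X: "(norm y + 1) powr (m-2) \<le> 2 * (norm q + 1) powr (m-2)" .
  have "norm (H y) \<le> A1 * (2 * (norm q + 1) powr (m-2))"
    using bound2[of y] mult_left_mono[OF X A1] by (rule order_trans)
  thus "onorm (blinfun_apply (H y)) \<le> 2*A1*(norm q+1) powr (m-2)"
    by (simp add: norm_blinfun.rep_eq[symmetric])
qed

lemma pw:
  fixes N m :: real
  assumes N: "N \<ge> 1" and m: "1 < m" "m \<le> 2"
  shows "N * (N+1) powr (3*m-5) \<le> 4 * N powr (3*m-4)"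
proof -
  have "N * (N+1) powr (3*m-5) \<le> (N+1) * (N+1) powr (3*m-5)"
    by (rule mult_right_mono) auto
  also have "\<dots> = (N+1) powr (3*m-4)"
    using N by (simp add: powr_add[symmetric] powr_mult_base)
  also have "\<dots> \<le> 4 * N powr (3*m-4)"
  proof (cases "3*m-4 \<ge> 0")
    case True
    have "(N+1) powr (3*m-4) \<le> (2*N) powr (3*m-4)"
      by (rule powr_mono2) (use True N in auto)
    also have "\<dots> = 2 powr (3*m-4) * N powr (3*m-4)" by (simp add: powr_mult)
    also have "2 powr (3*m-4) \<le> (2::real) powr 2" using m by (intro powr_mono) auto
    hence "2 powr (3*m-4) * N powr (3*m-4) \<le> 4 * N powr (3*m-4)"
      by (intro mult_right_mono) auto
    finally show ?thesis .
  next
    case False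
    have "(N+1) powr (3*m-4) \<le> N powr (3*m-4)"
      by (rule powr_mono2') (use False N in auto)
    also have "\<dots> \<le> 4 * N powr (3*m-4)" by simp
    finally show ?thesis .
  qed
  finally show ?thesis .
qed

theorem lemma14:
  fixes U :: "'a::euclidean_space \<Rightarrow> real"
    and G :: "'a \<Rightarrow> 'a"
    and H :: "'a \<Rightarrow> ('a \<Rightarrow>\<^sub>L 'a)"
    and T :: "'a \<Rightarrow> ('a \<Rightarrow>\<^sub>L ('a \<Rightarrow>\<^sub>L 'a))"
    and m A1 A2 R :: real
  assumes grad: "\<And>q. (U has_derivative (\<lambda>h. G q \<bullet> h)) (at q)"
    and hess: "\<And>q. (G has_derivative blinfun_apply (H q)) (at q)"
    and third: "\<And>q. (H has_derivative blinfun_apply (T q)) (at q)"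
    and C3: "continuous_on UNIV T"
    and m: "1 < m" "m \<le> 2"
    and A1: "A1 \<ge> 0"
    and bound2: "\<And>q. norm (H q) \<le> A1 * (norm q + 1) powr (m - 2)"
    and bound3: "\<And>q. norm (T q) \<le> A1 * (norm q + 1) powr (m - 3)"
    and A2: "A2 > 0" and R: "R \<ge> 0"
    and lower: "\<And>q. norm q \<ge> R \<Longrightarrow> G q \<bullet> (H q (G q)) \<ge> A2 * norm q powr (3 * m - 4)"
  shows "\<exists>R0 \<delta> \<eta>. R0 \<ge> 0 \<and> \<delta> > 0 \<and> \<eta> > 0 \<and>
           (\<forall>q x z. norm q \<ge> R0 \<and> max (norm (q - x)) (norm (q - z)) \<le> \<delta> * norm q \<longrightarrow>
              G x \<bullet> (H q (G z)) \<ge> \<eta> * norm q powr (3 * m - 4))"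
proof -
  define C where "C = norm (G 0) + A1/(m-1)"
  have C0: "C \<ge> 0" using m A1 by (simp add: C_def)
  define K where "K = 48 * A1^2 * C + 1"
  have "48 * A1^2 * C \<ge> 0" using C0 by simp
  hence K0: "K > 0" unfolding K_def by linarith
  define \<delta> where "\<delta> = min (1/2) (A2/K)"
  have d0: "\<delta> > 0" using A2 K0 by (simp add: \<delta>_def)
  have dK: "K * \<delta> \<le> A2" using K0 by (simp add: \<delta>_def field_simps min_def)
  have Gb: "\<And>y. norm (G y) \<le> C * (norm y + 1) powr (m-1)"
    unfolding C_def by (rule Gbound[OF hess m A1 bound2])
  show ?thesis
  proof (intro exI conjI allI impI)
    show "max R 1 \<ge> 0" "\<delta> > 0" "A2/2 > 0" using d0 A2 by auto
    fix q x z :: 'a assume a: "norm q \<ge> max R 1 \<and> max (norm (q - x)) (norm (q - z)) \<le> \<delta> * norm q"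
    define N where "N = norm q"
    define P where "P = N + 1"
    have N1: "N \<ge> 1" and NR: "N \<ge> R" using a by (auto simp: N_def)
    have P0: "P > 0" using N1 by (simp add: P_def)
    have dx: "norm (x - q) \<le> \<delta> * N" and dz: "norm (z - q) \<le> \<delta> * N"
      using a by (auto simp: N_def norm_minus_commute)
    have "2 * \<delta> \<le> 1" by (simp add: \<delta>_def)
    hence dh2: "2 * \<delta> * N \<le> N" using N1 by (smt (verit) mult_right_mono mult_cancel_right1)
    hence dh: "\<delta> * N \<le> N / 2" by simp
    have A1P: "A1 * P powr (m-2) \<ge> 0" using A1 by simp
    have ex: "norm (G x - G q) \<le> 2*A1*P powr (m-2) * (\<delta> * N)"
    proof -
      have "norm (G x - G q) \<le> 2*A1*P powr (m-2) * norm (x - q)"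
        unfolding P_def N_def by (rule Gmvt[OF hess m A1 bound2]) (use dx dh in \<open>simp add: N_def\<close>)
      also have "\<dots> \<le> 2*A1*P powr (m-2) * (\<delta> * N)"
        by (rule mult_left_mono[OF dx]) (use A1P in simp)
      finally show ?thesis .
    qed
    have ez: "norm (G z - G q) \<le> 2*A1*P powr (m-2) * (\<delta> * N)"
    proof -
      have "norm (G z - G q) \<le> 2*A1*P powr (m-2) * norm (z - q)"
        unfolding P_def N_def by (rule Gmvt[OF hess m A1 bound2]) (use dz dh in \<open>simp add: N_def\<close>)
      also have "\<dots> \<le> 2*A1*P powr (m-2) * (\<delta> * N)"
        by (rule mult_left_mono[OF dz]) (use A1P in simp)
      finally show ?thesis .
    qed
    have eH: "norm (H q) \<le> A1 * P powr (m-2)" using bound2[of q] by (simp add: P_def N_def)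
    have eGq: "norm (G q) \<le> C * P powr (m-1)" using Gb[of q] by (simp add: P_def N_def)
    have eGz: "norm (G z) \<le> C * (2 * P powr (m-1))"
    proof -
      have "norm z \<le> N + \<delta> * N" using dz norm_triangle_ineq2[of z q] by (simp add: N_def)
      moreover have "\<delta> * N \<le> N" using dh N1 by linarith
      ultimately have "norm z + 1 \<le> 2 * N + 2" using N1 by linarith
      hence z2: "norm z + 1 \<le> 2 * P" unfolding P_def by simp
      have "(norm z + 1) powr (m-1) \<le> (2*P) powr (m-1)"
        by (rule powr_mono2) (use m z2 in auto)
      also have "\<dots> = 2 powr (m-1) * P powr (m-1)" using P0 by (simp add: powr_mult)
      also have "\<dots> \<le> 2 * P powr (m-1)"
      proof (rule mult_right_mono)
        show "2 powr (m-1) \<le> (2::real)" using m powr_mono[of "m-1" 1 2] by simp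
      qed simp
      finally show ?thesis using Gb[of z] C0 by (meson mult_left_mono order_trans)
    qed
    have PP: "P powr (m-2) * P powr (m-2) * P powr (m-1) = P powr (3*m-5)"
      using P0 by (simp add: powr_add[symmetric])
    have pwN: "N * P powr (3*m-5) \<le> 4 * N powr (3*m-4)" unfolding P_def by (rule pw[OF N1 m])
    define E where "E = A1^2 * C * \<delta> * (N * P powr (3*m-5))"
    have E0: "E \<ge> 0" using C0 d0 N1 by (simp add: E_def)
    have E1: "\<bar>(G x - G q) \<bullet> H q (G z)\<bar> \<le> 4 * E"
    proof -
      have "\<bar>(G x - G q) \<bullet> H q (G z)\<bar> \<le> norm (G x - G q) * (norm (H q) * norm (G z))"
        by (meson Cauchy_Schwarz_ineq2 mult_left_mono norm_blinfun norm_ge_zero order_trans)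
      also have "\<dots> \<le> (2*A1*P powr (m-2) * (\<delta> * N)) * ((A1 * P powr (m-2)) * (C * (2 * P powr (m-1))))"
        by (intro mult_mono ex eH eGz) (use A1 C0 d0 N1 in \<open>auto intro!: mult_nonneg_nonneg\<close>)
      also have "\<dots> = 4 * E" unfolding E_def PP[symmetric] by (simp add: power2_eq_square algebra_simps)
      finally show ?thesis .
    qed
    have E2: "\<bar>G q \<bullet> H q (G z - G q)\<bar> \<le> 2 * E"
    proof -
      have "\<bar>G q \<bullet> H q (G z - G q)\<bar> \<le> norm (G q) * (norm (H q) * norm (G z - G q))"
        by (meson Cauchy_Schwarz_ineq2 mult_left_mono norm_blinfun norm_ge_zero order_trans)
      also have "\<dots> \<le> (C * P powr (m-1)) * ((A1 * P powr (m-2)) * (2*A1*P powr (m-2) * (\<delta> * N)))"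
        by (intro mult_mono eGq eH ez) (use A1 C0 d0 N1 in \<open>auto intro!: mult_nonneg_nonneg\<close>)
      also have "\<dots> = 2 * E" unfolding E_def PP[symmetric] by (simp add: power2_eq_square algebra_simps)
      finally show ?thesis .
    qed
    have E6: "6 * E \<le> A2/2 * N powr (3*m-4)"
    proof -
      have "6 * E \<le> 6 * (A1^2 * C * \<delta>) * (4 * N powr (3*m-4))"
      proof -
        have nn: "0 \<le> 6 * (A1^2 * C * \<delta>)" using C0 d0 by simp
        have "6 * E = 6 * (A1^2 * C * \<delta>) * (N * P powr (3*m-5))" by (simp add: E_def)
        also have "\<dots> \<le> 6 * (A1^2 * C * \<delta>) * (4 * N powr (3*m-4))"
          by (rule mult_left_mono[OF pwN nn])
        finally show ?thesis .
      qed
      also have "\<dots> = (48 * A1^2 * C * \<delta>) / 2 * N powr (3*m-4)" by simp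
      also have "\<dots> \<le> A2 / 2 * N powr (3*m-4)"
      proof (rule mult_right_mono)
        have "48 * A1^2 * C * \<delta> \<le> K * \<delta>" using d0 by (simp add: K_def)
        thus "48 * A1^2 * C * \<delta> / 2 \<le> A2/2" using dK by linarith
      qed simp
      finally show ?thesis .
    qed
    have dec: "G x \<bullet> H q (G z) = G q \<bullet> H q (G q) + (G x - G q) \<bullet> H q (G z) + G q \<bullet> H q (G z - G q)"
      by (simp add: inner_diff_left inner_diff_right blinfun.diff_right)
    have L: "G q \<bullet> H q (G q) \<ge> A2 * N powr (3*m-4)" using lower NR by (simp add: N_def)
    show "G x \<bullet> H q (G z) \<ge> A2/2 * norm q powr (3*m-4)"
      using dec L E1 E2 E6 unfolding N_def by linarith
  qed
qed

end
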